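(* (1) Let $(Y^*,Y,X)$ be random variables with $Y^*,Y\in\{0,1\}$, $X=(\tilde X,Z)\in\mathcal X$, $\tilde X\in\tilde{\mathcal X}$, $Z$ taking values in a finite set $\mathcal Z$. Let $p(x)=\Pr(Y=1\mid X=x)$, $p^*(x)=\Pr(Y^*=1\mid X=x)$, $\underline p_z(\tilde x)=\inf_{z\in\mathcal Z}p(\tilde x,z)$, $\bar p_z(\tilde x)=\sup_{z\in\mathcal Z}p(\tilde x,z)$, $L_1(x)=\frac{p(x)-\underline p_z(\tilde x)}{1-\underline p_z(\tilde x)}$, $U_1(x)=\frac{p(x)}{\bar p_z(\tilde x)}$. Assume: for all $x=(\tilde x,z)$ and $y\in\{0,1\}$, $\Pr(Y=1-y\mid Y^*=y,X=x)=\Pr(Y=1-y\mid Y^*=y,\tilde X=\tilde x)$; for all $\tilde x$, $\Pr(Y=0\mid Y^*=1,\tilde x)+\Pr(Y=1\mid Y^*=0,\tilde x)\le1$; and for all $\tilde x$, $\bar p_z(\tilde x)>0$ and $\underline p_z(\tilde x)<1$. Then the sharp bounds for $p^*(x)$ are $[p(x),U_1(x)]$ when $\Pr(Y=1\mid Y^*=0,\tilde x)=0$, and $[L_1(x),p(x)]$ when $\Pr(Y=0\mid Y^*=1,\tilde x)=0$. (2) Let $(Y^*,Y,X,W)$ be random variables with $Y^*,Y\in\{0,1\}$, $X\in\mathcal X$, $W$ taking values in a finite set of reals $\mathcal W$. Let $p^*(x)=\Pr(Y^*=1\mid X=x)$, $p_W(x,w)=\Pr(Y=1\mid X=x,W=w)$,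 $\underline p_w(x,w)=\inf_{\tilde w\le w}p_W(x,\tilde w)$, $\bar p_w(x,w)=\sup_{\tilde w\le w}p_W(x,\tilde w)$ (over $\tilde w\in\mathcal W$), $L_2(x)=\sup_{w\in\mathcal W}\frac{p_W(x,w)-\underline p_w(x,w)}{1-\underline p_w(x,w)}$, $U_2(x)=\inf_{w\in\mathcal W}\frac{p_W(x,w)}{\bar p_w(x,w)}$. Assume: $\Pr(Y^*=1\mid x,w)=p^*(x)$ for all $x,w$; for all $x$, $y\in\{0,1\}$ and $w_1>w_2$ in $\mathcal W$, $\Pr(Y=1-y\mid Y^*=y,x,w_1)\le\Pr(Y=1-y\mid Y^*=y,x,w_2)$; for all $x,w$, $\Pr(Y=1\mid Y^*=0,x,w)+\Pr(Y=0\mid Y^*=1,x,w)\le1$ and $0<p_W(x,w)<1$. Then the sharp bounds for $p^*(x)$ are $[\sup_{w\in\mathcal W}p_W(x,w),U_2(x)]$ when $\Pr(Y=1\mid Y^*=0,x,w)=0$, and $[L_2(x),\inf_{w\in\mathcal W}p_W(x,w)]$ when $\Pr(Y=0\mid Y^*=1,x,w)=0$.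
   Context: $Y^*$ is the true (unobserved) binary outcome and $Y$ the observed, possibly misreported outcome; conditioning on $\tilde x$ (resp. $x,w$) means conditioning on $\tilde X=\tilde x$ (resp. $X=x,W=w$). "Sharp" means no tighter bounds on $p^*(x)$ are implied by the assumptions and the distribution of the observed variables. *)

theory Defs
  imports Complex_Main
begin

(* Misreporting probability Pr(Y = 1 - y | Y* = y, cond), given the kernel
   k y c = Pr(Y = 1 | Y* = y, cond). *)
definition misr :: "(bool \<Rightarrow> 'b \<Rightarrow> real) \<Rightarrow> bool \<Rightarrow> 'b \<Rightarrow> real" where
  "misr k y c = (if y then 1 - k True c else k False c)"

(* ps x = Pr(Y*=1 | X=x); q y x = Pr(Y=1 | Y*=y, X=x);
   observed p(x) = Pr(Y=1 | X=x) by the law of total probability *)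
definition obs1 :: "('a \<times> 'z \<Rightarrow> real) \<Rightarrow> (bool \<Rightarrow> 'a \<times> 'z \<Rightarrow> real) \<Rightarrow> 'a \<times> 'z \<Rightarrow> real" where
  "obs1 ps q x = ps x * q True x + (1 - ps x) * q False x"

(* qt y xt = Pr(Y=1 | Y*=y, Xtilde=xt).  Maintained assumptions of part (1). *)
definition model1 :: "('a \<times> 'z \<Rightarrow> real) \<Rightarrow> (bool \<Rightarrow> 'a \<times> 'z \<Rightarrow> real) \<Rightarrow> (bool \<Rightarrow> 'a \<Rightarrow> real) \<Rightarrow> bool" where
  "model1 ps q qt \<longleftrightarrow>
     (\<forall>x. 0 \<le> ps x \<and> ps x \<le> 1) \<and>
     (\<forall>y x. 0 \<le> q y x \<and> q y x \<le> 1) \<and>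
     (\<forall>y xt. 0 \<le> qt y xt \<and> qt y xt \<le> 1) \<and>
     (\<forall>y xt z. misr q y (xt, z) = misr qt y xt) \<and>
     (\<forall>xt. misr qt True xt + misr qt False xt \<le> 1)"

definition plow1 :: "('a \<times> 'z \<Rightarrow> real) \<Rightarrow> 'a \<Rightarrow> real" where
  "plow1 p xt = (INF z. p (xt, z))"

definition pup1 :: "('a \<times> 'z \<Rightarrow> real) \<Rightarrow> 'a \<Rightarrow> real" where
  "pup1 p xt = (SUP z. p (xt, z))"

definition L1 :: "('a \<times> 'z \<Rightarrow> real) \<Rightarrow> 'a \<times> 'z \<Rightarrow> real" where
  "L1 p x = (p x - plow1 p (fst x)) / (1 - plow1 p (fst x))"

definition U1 :: "('a \<times> 'z \<Rightarrow> real) \<Rightarrow> 'a \<times> 'z \<Rightarrow> real" where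
  "U1 p x = p x / pup1 p (fst x)"

(* Identified set of p*(x): all values of p*(x) over latent structures satisfying the
   maintained assumptions plus the extra restriction C and reproducing the observed p. *)
definition ident1 :: "((bool \<Rightarrow> 'a \<Rightarrow> real) \<Rightarrow> bool) \<Rightarrow> ('a \<times> 'z \<Rightarrow> real) \<Rightarrow> 'a \<times> 'z \<Rightarrow> real set" where
  "ident1 C p x = {ps' x | ps' q' qt'. model1 ps' q' qt' \<and> C qt' \<and> (\<forall>x'. obs1 ps' q' x' = p x')}"

(* psw x w = Pr(Y*=1 | X=x, W=w); q y x w = Pr(Y=1 | Y*=y, X=x, W=w) *)
definition obs2 :: "('x \<Rightarrow> real \<Rightarrow> real) \<Rightarrow> (bool \<Rightarrow> 'x \<Rightarrow> real \<Rightarrow> real) \<Rightarrow> 'x \<Rightarrow> real \<Rightarrow> real" where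
  "obs2 psw q x w = psw x w * q True x w + (1 - psw x w) * q False x w"

definition misr2 :: "(bool \<Rightarrow> 'x \<Rightarrow> real \<Rightarrow> real) \<Rightarrow> bool \<Rightarrow> 'x \<Rightarrow> real \<Rightarrow> real" where
  "misr2 q y x w = (if y then 1 - q True x w else q False x w)"

definition model2 :: "real set \<Rightarrow> ('x \<Rightarrow> real) \<Rightarrow> ('x \<Rightarrow> real \<Rightarrow> real) \<Rightarrow> (bool \<Rightarrow> 'x \<Rightarrow> real \<Rightarrow> real) \<Rightarrow> bool" where
  "model2 W ps psw q \<longleftrightarrow>
     (\<forall>x. 0 \<le> ps x \<and> ps x \<le> 1) \<and>
     (\<forall>x w. w \<in> W \<longrightarrow> psw x w = ps x) \<and>
     (\<forall>y x w. w \<in> W \<longrightarrow> 0 \<le> q y x w \<and> q y x w \<le> 1) \<and>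
     (\<forall>x y w1 w2. w1 \<in> W \<longrightarrow> w2 \<in> W \<longrightarrow> w1 > w2 \<longrightarrow> misr2 q y x w1 \<le> misr2 q y x w2) \<and>
     (\<forall>x w. w \<in> W \<longrightarrow> misr2 q False x w + misr2 q True x w \<le> 1)"

definition plow2 :: "real set \<Rightarrow> ('x \<Rightarrow> real \<Rightarrow> real) \<Rightarrow> 'x \<Rightarrow> real \<Rightarrow> real" where
  "plow2 W pW x w = (INF w' \<in> {w' \<in> W. w' \<le> w}. pW x w')"

definition pup2 :: "real set \<Rightarrow> ('x \<Rightarrow> real \<Rightarrow> real) \<Rightarrow> 'x \<Rightarrow> real \<Rightarrow> real" where
  "pup2 W pW x w = (SUP w' \<in> {w' \<in> W. w' \<le> w}. pW x w')"

definition L2 :: "real set \<Rightarrow> ('x \<Rightarrow> real \<Rightarrow> real) \<Rightarrow> 'x \<Rightarrow> real" where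
  "L2 W pW x = (SUP w \<in> W. (pW x w - plow2 W pW x w) / (1 - plow2 W pW x w))"

definition U2 :: "real set \<Rightarrow> ('x \<Rightarrow> real \<Rightarrow> real) \<Rightarrow> 'x \<Rightarrow> real" where
  "U2 W pW x = (INF w \<in> W. pW x w / pup2 W pW x w)"

definition ident2 :: "real set \<Rightarrow> ((bool \<Rightarrow> 'x \<Rightarrow> real \<Rightarrow> real) \<Rightarrow> bool) \<Rightarrow> ('x \<Rightarrow> real \<Rightarrow> real) \<Rightarrow> 'x \<Rightarrow> real set" where
  "ident2 W C pW x = {ps' x | ps' psw' q'. model2 W ps' psw' q' \<and> C q' \<and>
                        (\<forall>x' w. w \<in> W \<longrightarrow> obs2 psw' q' x' w = pW x' w)}"

end

theory Submission
  imports Defs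
begin



lemma misr_T[simp]: "misr k True c = 1 - k True c" and misr_F[simp]: "misr k False c = k False c"
  by (simp_all add: misr_def)

lemma misr2_T[simp]: "misr2 k True x w = 1 - k True x w" and misr2_F[simp]: "misr2 k False x w = k False x w"
  by (simp_all add: misr2_def)

lemma conv01:
  fixes s u v :: real
  assumes "0 \<le> s" "s \<le> 1" "0 \<le> u" "u \<le> 1" "0 \<le> v" "v \<le> 1"
  shows "0 \<le> s * u + (1 - s) * v \<and> s * u + (1 - s) * v \<le> 1"
proof -
  have "s * u \<le> s" using assms by (simp add: mult_left_le)
  moreover have "(1 - s) * v \<le> 1 - s" using assms by (simp add: mult_left_le)
  ultimately show ?thesis using assms by simp
qed

lemma model1_q:
  assumes "model1 ps q qt"
  shows "q True (xt, z) = qt True xt" "q False (xt, z) = qt False xt"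
proof -
  have "misr q True (xt, z) = misr qt True xt" "misr q False (xt, z) = misr qt False xt"
    using assms unfolding model1_def by blast+
  then show "q True (xt, z) = qt True xt" "q False (xt, z) = qt False xt" by simp_all
qed

lemma obs1_bounds:
  assumes "model1 ps q qt"
  shows "0 \<le> obs1 ps q x \<and> obs1 ps q x \<le> 1"
  using assms unfolding model1_def obs1_def by (meson conv01)

lemma pup1_ge: fixes p :: "'a \<times> 'z::finite \<Rightarrow> real"
  shows "p (xt, z) \<le> pup1 p xt"
  unfolding pup1_def by (rule cSUP_upper) (auto intro: bdd_above_finite)

lemma pup1_le: fixes p :: "'a \<times> 'z::finite \<Rightarrow> real"
  assumes "\<And>z. p (xt, z) \<le> c" shows "pup1 p xt \<le> c"
  unfolding pup1_def by (rule cSUP_least) (auto simp: assms)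

lemma plow1_le: fixes p :: "'a \<times> 'z::finite \<Rightarrow> real"
  shows "plow1 p xt \<le> p (xt, z)"
  unfolding plow1_def by (rule cINF_lower) (auto intro: bdd_below_finite)

lemma plow1_ge: fixes p :: "'a \<times> 'z::finite \<Rightarrow> real"
  assumes "\<And>z. c \<le> p (xt, z)" shows "c \<le> plow1 p xt"
  unfolding plow1_def by (rule cINF_greatest) (auto simp: assms)

lemma constr1:
  assumes M: "model1 ps1 q1 qt1" and a: "0 \<le> a" "a < c" "c \<le> 1"
    and B: "\<And>z'. a \<le> obs1 ps1 q1 (xt, z') \<and> obs1 ps1 q1 (xt, z') \<le> c"
  shows "\<exists>ps' q' qt'. model1 ps' q' qt' \<and> qt' False xt = a \<and> qt' True xt = c \<and>
     (\<forall>x'. obs1 ps' q' x' = obs1 ps1 q1 x') \<and> ps' (xt, z) = (obs1 ps1 q1 (xt, z) - a) / (c - a)"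
proof -
  define p where "p = obs1 ps1 q1"
  define ps' where "ps' = (\<lambda>x'. if fst x' = xt then (p x' - a) / (c - a) else ps1 x')"
  define qt' where "qt' = (\<lambda>y xt'. if xt' = xt then (if y then c else a) else qt1 y xt')"
  define q' where "q' = (\<lambda>y x'. if fst x' = xt then (if y then c else a) else q1 y x')"
  have B': "a \<le> p x' \<and> p x' \<le> c" if "fst x' = xt" for x'
    using B[of "snd x'"] that unfolding p_def by (cases x') auto
  have m: "model1 ps' q' qt'"
    unfolding model1_def
  proof (intro conjI allI)
    fix x'
    show "0 \<le> ps' x'" using B'[of x'] M a unfolding ps'_def model1_def by (cases x') auto
    show "ps' x' \<le> 1" using B'[of x'] M a unfolding ps'_def model1_def by (cases x') auto
  next
    fix y x'
    show "0 \<le> q' y x'" using M a unfolding q'_def model1_def by (cases x') auto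
    show "q' y x' \<le> 1" using M a unfolding q'_def model1_def by (cases x') auto
  next
    fix y xt'
    show "0 \<le> qt' y xt'" using M a unfolding qt'_def model1_def by auto
    show "qt' y xt' \<le> 1" using M a unfolding qt'_def model1_def by auto
  next
    fix y xt' z'
    show "misr q' y (xt', z') = misr qt' y xt'"
      using model1_q[OF M] unfolding q'_def qt'_def by (cases y) auto
  next
    fix xt'
    show "misr qt' True xt' + misr qt' False xt' \<le> 1"
      using M a unfolding qt'_def model1_def by auto
  qed
  have o: "obs1 ps' q' x' = p x'" for x'
  proof (cases "fst x' = xt")
    case True
    have "c - a \<noteq> 0" using a by simp
    have e0: "r * c + (1 - r) * a = a + r * (c - a)" for r by (simp add: algebra_simps)
    have e: "(p x' - a) / (c - a) * c + (1 - (p x' - a) / (c - a)) * a = a + (p x' - a) / (c - a) * (c - a)"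
      by (rule e0)
    have "(p x' - a) / (c - a) * (c - a) = p x' - a" using \<open>c - a \<noteq> 0\<close> by simp
    then show ?thesis using True e unfolding obs1_def ps'_def q'_def by simp
  next
    case False
    then show ?thesis unfolding obs1_def ps'_def q'_def p_def by simp
  qed
  show ?thesis
    by (rule exI[of _ ps'], rule exI[of _ q'], rule exI[of _ qt'])
       (use m o in \<open>auto simp: qt'_def ps'_def p_def\<close>)
qed


lemma part1a:
  fixes ps1 :: "'a \<times> 'z::finite \<Rightarrow> real"
  assumes M: "model1 ps1 q1 qt1" and pos: "\<forall>xt'. pup1 (obs1 ps1 q1) xt' > 0"
  shows "ident1 (\<lambda>qt'. misr qt' False xt = 0) (obs1 ps1 q1) (xt, z)
            = {obs1 ps1 q1 (xt, z) .. U1 (obs1 ps1 q1) (xt, z)}"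
proof -
  define p where "p = obs1 ps1 q1"
  define P where "P = pup1 p xt"
  have P0: "P > 0" using pos unfolding P_def p_def by blast
  have pb: "0 \<le> p x' \<and> p x' \<le> 1" for x' using obs1_bounds[OF M] unfolding p_def by blast
  have pP: "p (xt, z') \<le> P" for z' unfolding P_def by (rule pup1_ge)
  have P1: "P \<le> 1" unfolding P_def by (rule pup1_le) (use pb in blast)
  have U: "U1 p (xt, z) = p (xt, z) / P" unfolding U1_def P_def by simp
  show ?thesis unfolding p_def[symmetric] U
  proof (intro equalityI subsetI)
    fix t assume "t \<in> ident1 (\<lambda>qt'. misr qt' False xt = 0) p (xt, z)"
    then obtain ps' q' qt' where t: "t = ps' (xt, z)" and m: "model1 ps' q' qt'"
      and c0: "misr qt' False xt = 0" and o: "\<forall>x'. obs1 ps' q' x' = p x'"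
      unfolding ident1_def by blast
    define c where "c = qt' True xt"
    have pe: "p (xt, z') = ps' (xt, z') * c" for z'
      using o[rule_format, of "(xt, z')"] model1_q[OF m, of xt z'] c0 unfolding obs1_def c_def by simp
    have c01: "0 \<le> c" "c \<le> 1" using m unfolding model1_def c_def by auto
    have ps01: "0 \<le> ps' x' \<and> ps' x' \<le> 1" for x' using m unfolding model1_def by blast
    have "p (xt, z') \<le> c" for z' unfolding pe using ps01[of "(xt,z')"] c01 by (simp add: mult_left_le_one_le)
    then have Pc: "P \<le> c" unfolding P_def by (rule pup1_le)
    have lo: "p (xt, z) \<le> t" unfolding pe t using ps01[of "(xt,z)"] c01 by (simp add: mult_left_le)
    have "t = p (xt, z) / c" unfolding pe t using Pc P0 by simp
    also have "\<dots> \<le> p (xt, z) / P" using Pc P0 pb[of "(xt,z)"] by (simp add: divide_left_mono)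
    finally show "t \<in> {p (xt, z)..p (xt, z) / P}" using lo by simp
  next
    fix t assume "t \<in> {p (xt, z)..p (xt, z) / P}"
    then have t1: "p (xt, z) \<le> t" and t2: "t \<le> p (xt, z) / P" by auto
    define c where "c = (if p (xt, z) = 0 then 1 else p (xt, z) / t)"
    have cP: "P \<le> c \<and> c \<le> 1 \<and> p (xt, z) / c = t"
    proof (cases "p (xt, z) = 0")
      case True
      then show ?thesis using t1 t2 P1 unfolding c_def by simp
    next
      case False
      then have pp: "p (xt, z) > 0" using pb[of "(xt,z)"] by simp
      then have tp: "t > 0" using t1 by simp
      have "P * t \<le> p (xt, z)" using t2 P0 by (simp add: field_simps)
      then have "P \<le> p (xt, z) / t" using tp by (simp add: field_simps)
      moreover have "p (xt, z) / t \<le> 1" using t1 tp by simp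
      ultimately show ?thesis using False tp unfolding c_def by simp
    qed
    have "\<exists>ps' q' qt'. model1 ps' q' qt' \<and> qt' False xt = 0 \<and> qt' True xt = c \<and>
       (\<forall>x'. obs1 ps' q' x' = obs1 ps1 q1 x') \<and> ps' (xt, z) = (obs1 ps1 q1 (xt, z) - 0) / (c - 0)"
      by (rule constr1[OF M]) (use cP P0 pb pP in \<open>auto simp: p_def intro: order_trans\<close>)
    then obtain ps' q' qt' where "model1 ps' q' qt'" "qt' False xt = 0"
       "\<forall>x'. obs1 ps' q' x' = p x'" "ps' (xt, z) = t"
      using cP unfolding p_def by auto
    then show "t \<in> ident1 (\<lambda>qt'. misr qt' False xt = 0) p (xt, z)"
      unfolding ident1_def by fastforce
  qed
qed

lemma part1b:
  fixes ps1 :: "'a \<times> 'z::finite \<Rightarrow> real"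
  assumes M: "model1 ps1 q1 qt1" and lt: "\<forall>xt'. plow1 (obs1 ps1 q1) xt' < 1"
  shows "ident1 (\<lambda>qt'. misr qt' True xt = 0) (obs1 ps1 q1) (xt, z)
            = {L1 (obs1 ps1 q1) (xt, z) .. obs1 ps1 q1 (xt, z)}"
proof -
  define p where "p = obs1 ps1 q1"
  define Q where "Q = plow1 p xt"
  have Q1: "Q < 1" using lt unfolding Q_def p_def by blast
  have pb: "0 \<le> p x' \<and> p x' \<le> 1" for x' using obs1_bounds[OF M] unfolding p_def by blast
  have pQ: "Q \<le> p (xt, z')" for z' unfolding Q_def by (rule plow1_le)
  have Q0: "0 \<le> Q" unfolding Q_def by (rule plow1_ge) (use pb in blast)
  have L: "L1 p (xt, z) = (p (xt, z) - Q) / (1 - Q)" unfolding L1_def Q_def by simp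
  show ?thesis unfolding p_def[symmetric] L
  proof (intro equalityI subsetI)
    fix t assume "t \<in> ident1 (\<lambda>qt'. misr qt' True xt = 0) p (xt, z)"
    then obtain ps' q' qt' where t: "t = ps' (xt, z)" and m: "model1 ps' q' qt'"
      and c0: "misr qt' True xt = 0" and o: "\<forall>x'. obs1 ps' q' x' = p x'"
      unfolding ident1_def by blast
    define a where "a = qt' False xt"
    have pe: "p (xt, z') = ps' (xt, z') + (1 - ps' (xt, z')) * a" for z'
      using o[rule_format, of "(xt, z')"] model1_q[OF m, of xt z'] c0 unfolding obs1_def a_def by simp
    have a01: "0 \<le> a" "a \<le> 1" using m unfolding model1_def a_def by auto
    have ps01: "0 \<le> ps' x' \<and> ps' x' \<le> 1" for x' using m unfolding model1_def by blast
    have "a \<le> p (xt, z')" for z'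
    proof -
      have "a = ps' (xt, z') * a + (1 - ps' (xt, z')) * a" by (simp add: algebra_simps)
      also have "\<dots> \<le> ps' (xt, z') + (1 - ps' (xt, z')) * a"
        using ps01[of "(xt,z')"] a01 by (simp add: mult_left_le)
      finally show ?thesis unfolding pe .
    qed
    then have aQ: "a \<le> Q" unfolding Q_def by (rule plow1_ge)
    have hi: "t \<le> p (xt, z)" unfolding pe t using ps01[of "(xt,z)"] a01 by simp
    have "(1 - t) * (1 - Q) \<le> (1 - t) * (1 - a)"
      using aQ ps01[of "(xt,z)"] t by (intro mult_left_mono) auto
    then have "p (xt, z) - Q \<le> t * (1 - Q)" using pe[of z] t by (simp add: algebra_simps)
    then have "(p (xt, z) - Q) / (1 - Q) \<le> t" using Q1 by (simp add: divide_le_eq)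
    then show "t \<in> {(p (xt, z) - Q) / (1 - Q)..p (xt, z)}" using hi by simp
  next
    fix t assume "t \<in> {(p (xt, z) - Q) / (1 - Q)..p (xt, z)}"
    then have t1: "(p (xt, z) - Q) / (1 - Q) \<le> t" and t2: "t \<le> p (xt, z)" by auto
    have t1': "p (xt, z) - Q \<le> t * (1 - Q)" using t1 Q1 by (simp add: divide_le_eq)
    define a where "a = (if t = 1 then 0 else 1 - (1 - p (xt, z)) / (1 - t))"
    have aP: "0 \<le> a \<and> a \<le> Q \<and> a < 1 \<and> (p (xt, z) - a) / (1 - a) = t"
    proof (cases "t = 1")
      case True
      then show ?thesis using t2 pb[of "(xt,z)"] Q0 Q1 unfolding a_def by simp
    next
      case False
      have tl: "t < 1" using False t2 pb[of "(xt,z)"] by simp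
      have pl: "p (xt, z) < 1"
      proof (rule ccontr)
        assume "\<not> p (xt, z) < 1"
        then have "p (xt, z) = 1" using pb[of "(xt,z)"] by simp
        moreover have "(1 - t) * (1 - Q) > 0" using tl Q1 by simp
        ultimately show False using t1' by (simp add: algebra_simps)
      qed
      define r where "r = (1 - p (xt, z)) / (1 - t)"
      have r0: "0 < r" unfolding r_def using tl pl by simp
      have r1: "r \<le> 1" unfolding r_def using tl t2 by simp
      have rQ: "1 - Q \<le> r" unfolding r_def using tl t1' by (simp add: le_divide_eq algebra_simps)
      have "p (xt, z) - (1 - r) = r * t"
        unfolding r_def using tl by (simp add: field_simps)
      then have "(p (xt, z) - (1 - r)) / (1 - (1 - r)) = t" using r0 by simp
      then show ?thesis using False r0 r1 rQ unfolding a_def r_def[symmetric] by simp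
    qed
    have "\<exists>ps' q' qt'. model1 ps' q' qt' \<and> qt' False xt = a \<and> qt' True xt = 1 \<and>
       (\<forall>x'. obs1 ps' q' x' = obs1 ps1 q1 x') \<and> ps' (xt, z) = (obs1 ps1 q1 (xt, z) - a) / (1 - a)"
      by (rule constr1[OF M]) (use aP pb pQ in \<open>auto simp: p_def intro: order_trans\<close>)
    then obtain ps' q' qt' where "model1 ps' q' qt'" "qt' True xt = 1"
       "\<forall>x'. obs1 ps' q' x' = p x'" "ps' (xt, z) = t"
      using aP unfolding p_def by auto
    then show "t \<in> ident1 (\<lambda>qt'. misr qt' True xt = 0) p (xt, z)"
      unfolding ident1_def by fastforce
  qed
qed



lemma model2_mono:
  assumes "model2 W ps psw q" "w1 \<in> W" "w2 \<in> W" "w1 > w2"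
  shows "q True x w2 \<le> q True x w1" "q False x w1 \<le> q False x w2"
proof -
  have "misr2 q True x w1 \<le> misr2 q True x w2" "misr2 q False x w1 \<le> misr2 q False x w2"
    using assms unfolding model2_def by blast+
  then show "q True x w2 \<le> q True x w1" "q False x w1 \<le> q False x w2" by simp_all
qed

lemma constr2:
  assumes M: "model2 W ps2 psw2 q2" and t: "0 \<le> t" "t \<le> 1"
    and B: "\<forall>w\<in>W. 0 \<le> a w \<and> a w \<le> c w \<and> c w \<le> 1"
    and Mo: "\<forall>w1\<in>W. \<forall>w2\<in>W. w1 > w2 \<longrightarrow> a w1 \<le> a w2 \<and> c w2 \<le> c w1"
    and E: "\<forall>w\<in>W. t * c w + (1 - t) * a w = obs2 psw2 q2 x w"
  shows "\<exists>ps' psw' q'. model2 W ps' psw' q' \<and> (\<forall>w\<in>W. q' True x w = c w \<and> q' False x w = a w) \<and>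
     (\<forall>x' w. w \<in> W \<longrightarrow> obs2 psw' q' x' w = obs2 psw2 q2 x' w) \<and> ps' x = t"
proof -
  define ps' where "ps' = ps2(x := t)"
  define psw' where "psw' = psw2(x := (\<lambda>w. t))"
  define q' where "q' = (\<lambda>y x'. if x' = x then (if y then c else a) else q2 y x')"
  have m: "model2 W ps' psw' q'"
    unfolding model2_def
  proof (intro conjI allI impI)
    fix x' show "0 \<le> ps' x'" "ps' x' \<le> 1" using M t unfolding model2_def ps'_def by auto
  next
    fix x' w assume "w \<in> W" then show "psw' x' w = ps' x'"
      using M unfolding model2_def ps'_def psw'_def by auto
  next
    fix y x' w assume "w \<in> W"
    then show "0 \<le> q' y x' w" using M B unfolding model2_def q'_def by (auto intro: order_trans)
  next
    fix y x' w assume "w \<in> W"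
    then show "q' y x' w \<le> 1" using M B unfolding model2_def q'_def by (auto intro: order_trans)
  next
    fix x' y w1 w2 assume "w1 \<in> W" "w2 \<in> W" "w1 > w2"
    then show "misr2 q' y x' w1 \<le> misr2 q' y x' w2"
      using model2_mono[OF M, of w1 w2 x'] Mo unfolding q'_def by (cases y) auto
  next
    fix x' w assume "w \<in> W"
    then show "misr2 q' False x' w + misr2 q' True x' w \<le> 1"
      using M B unfolding model2_def q'_def by (auto simp del: misr2_T misr2_F simp: misr2_def)
  qed
  have o: "obs2 psw' q' x' w = obs2 psw2 q2 x' w" if "w \<in> W" for x' w
    using E that unfolding obs2_def psw'_def q'_def by auto
  show ?thesis
    by (rule exI[of _ ps'], rule exI[of _ psw'], rule exI[of _ q'])
       (use m o in \<open>auto simp: q'_def ps'_def\<close>)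
qed


lemma sup_W_ge: fixes f :: "real \<Rightarrow> real" assumes "finite W" "w \<in> W" shows "f w \<le> (SUP w\<in>W. f w)"
  by (rule cSUP_upper) (use assms in \<open>auto intro: bdd_above_finite\<close>)

lemma inf_W_le: fixes f :: "real \<Rightarrow> real" assumes "finite W" "w \<in> W" shows "(INF w\<in>W. f w) \<le> f w"
  by (rule cINF_lower) (use assms in \<open>auto intro: bdd_below_finite\<close>)

lemma part2a:
  assumes fin: "finite W" and ne: "W \<noteq> {}" and M: "model2 W ps2 psw2 q2"
    and pos: "\<forall>x' w. w \<in> W \<longrightarrow> 0 < obs2 psw2 q2 x' w \<and> obs2 psw2 q2 x' w < 1"
    and a0: "\<forall>w\<in>W. misr2 q2 False x w = 0"
  shows "ident2 W (\<lambda>q'. \<forall>w\<in>W. misr2 q' False x w = 0) (obs2 psw2 q2) x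
            = {(SUP w\<in>W. obs2 psw2 q2 x w) .. U2 W (obs2 psw2 q2) x}"
proof -
  define p where "p = obs2 psw2 q2"
  define S where "S = (SUP w\<in>W. p x w)"
  have pe: "p x w = ps2 x * q2 True x w" if "w \<in> W" for w
    using M a0 that unfolding p_def obs2_def model2_def by auto
  have mono: "p x w2 \<le> p x w1" if "w1 \<in> W" "w2 \<in> W" "w2 \<le> w1" for w1 w2
  proof (cases "w1 = w2")
    case False
    then have "w1 > w2" using that by simp
    then show ?thesis using pe that model2_mono(1)[OF M that(1,2), of x] M
      unfolding model2_def by (simp add: mult_left_mono)
  qed simp
  have pup: "pup2 W p x w = p x w" if w: "w \<in> W" for w
    unfolding pup2_def
  proof (rule antisym)
    show "(SUP w'\<in>{w' \<in> W. w' \<le> w}. p x w') \<le> p x w"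
      by (rule cSUP_least) (use w mono in auto)
    show "p x w \<le> (SUP w'\<in>{w' \<in> W. w' \<le> w}. p x w')"
      by (rule cSUP_upper) (use w fin in \<open>auto intro: bdd_above_finite\<close>)
  qed
  have "U2 W p x = (INF w\<in>W. 1)" unfolding U2_def
  proof (rule INF_cong)
    fix w assume w: "w \<in> W"
    then have "p x w > 0" using pos by (simp add: p_def)
    then show "p x w / pup2 W p x w = 1" using pup[OF w] by simp
  qed simp
  then have U: "U2 W p x = 1" using ne by simp
  show ?thesis unfolding p_def[symmetric] U S_def[symmetric]
  proof (intro equalityI subsetI)
    fix t assume "t \<in> ident2 W (\<lambda>q'. \<forall>w\<in>W. misr2 q' False x w = 0) p x"
    then obtain ps' psw' q' where t: "t = ps' x" and m: "model2 W ps' psw' q'"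
      and c0: "\<forall>w\<in>W. misr2 q' False x w = 0" and o: "\<forall>x' w. w \<in> W \<longrightarrow> obs2 psw' q' x' w = p x' w"
      unfolding ident2_def by blast
    have t01: "0 \<le> t" "t \<le> 1" using m t unfolding model2_def by auto
    have "p x w \<le> t" if w: "w \<in> W" for w
    proof -
      have "p x w = t * q' True x w" using o[rule_format, OF w, of x] w c0 m t unfolding obs2_def model2_def by auto
      also have "\<dots> \<le> t" using m w t01 unfolding model2_def by (simp add: mult_left_le)
      finally show ?thesis .
    qed
    then have "S \<le> t" unfolding S_def using ne by (intro cSUP_least) auto
    then show "t \<in> {S..1}" using t01 by simp
  next
    fix t assume "t \<in> {S..1}"
    then have t1: "S \<le> t" and t2: "t \<le> 1" by auto
    have pS: "p x w \<le> S" if "w \<in> W" for w unfolding S_def by (rule sup_W_ge[OF fin that])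
    obtain w0 where "w0 \<in> W" using ne by blast
    then have "0 < p x w0" using pos by (simp add: p_def)
    then have tp: "t > 0" using pS[OF \<open>w0 \<in> W\<close>] t1 by linarith
    have "\<exists>ps' psw' q'. model2 W ps' psw' q' \<and> (\<forall>w\<in>W. q' True x w = p x w / t \<and> q' False x w = 0) \<and>
     (\<forall>x' w. w \<in> W \<longrightarrow> obs2 psw' q' x' w = obs2 psw2 q2 x' w) \<and> ps' x = t"
    proof (rule constr2[OF M])
      show "0 \<le> t" "t \<le> 1" using tp t2 by auto
      show "\<forall>w\<in>W. 0 \<le> (0::real) \<and> 0 \<le> p x w / t \<and> p x w / t \<le> 1"
        using pos pS t1 tp unfolding p_def by (auto intro: order_trans less_imp_le)
      show "\<forall>w1\<in>W. \<forall>w2\<in>W. w2 < w1 \<longrightarrow> 0 \<le> (0::real) \<and> p x w2 / t \<le> p x w1 / t"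
        using mono tp by (auto intro: divide_right_mono)
      show "\<forall>w\<in>W. t * (p x w / t) + (1 - t) * 0 = obs2 psw2 q2 x w"
        using tp unfolding p_def by simp
    qed
    then obtain ps' psw' q' where "model2 W ps' psw' q'" "\<forall>w\<in>W. misr2 q' False x w = 0"
       "\<forall>x' w. w \<in> W \<longrightarrow> obs2 psw' q' x' w = p x' w" "ps' x = t"
      unfolding p_def by auto
    then show "t \<in> ident2 W (\<lambda>q'. \<forall>w\<in>W. misr2 q' False x w = 0) p x"
      unfolding ident2_def by fastforce
  qed
qed

lemma part2b:
  assumes fin: "finite W" and ne: "W \<noteq> {}" and M: "model2 W ps2 psw2 q2"
    and pos: "\<forall>x' w. w \<in> W \<longrightarrow> 0 < obs2 psw2 q2 x' w \<and> obs2 psw2 q2 x' w < 1"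
    and b0: "\<forall>w\<in>W. misr2 q2 True x w = 0"
  shows "ident2 W (\<lambda>q'. \<forall>w\<in>W. misr2 q' True x w = 0) (obs2 psw2 q2) x
            = {L2 W (obs2 psw2 q2) x .. (INF w\<in>W. obs2 psw2 q2 x w)}"
proof -
  define p where "p = obs2 psw2 q2"
  define S where "S = (INF w\<in>W. p x w)"
  have pe: "p x w = ps2 x + (1 - ps2 x) * q2 False x w" if "w \<in> W" for w
    using M b0 that unfolding p_def obs2_def model2_def by auto
  have mono: "p x w1 \<le> p x w2" if "w1 \<in> W" "w2 \<in> W" "w2 \<le> w1" for w1 w2
  proof (cases "w1 = w2")
    case False
    then have "w1 > w2" using that by simp
    then show ?thesis using pe that model2_mono(2)[OF M that(1,2), of x] M
      unfolding model2_def by (simp add: mult_left_mono)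
  qed simp
  have plow: "plow2 W p x w = p x w" if w: "w \<in> W" for w
    unfolding plow2_def
  proof (rule antisym)
    show "p x w \<le> (INF w'\<in>{w' \<in> W. w' \<le> w}. p x w')"
      by (rule cINF_greatest) (use w mono in auto)
    show "(INF w'\<in>{w' \<in> W. w' \<le> w}. p x w') \<le> p x w"
      by (rule cINF_lower) (use w fin in \<open>auto intro: bdd_below_finite\<close>)
  qed
  have "L2 W p x = (SUP w\<in>W. 0)" unfolding L2_def
  proof (rule SUP_cong)
    fix w assume w: "w \<in> W"
    show "(p x w - plow2 W p x w) / (1 - plow2 W p x w) = 0" using plow[OF w] by simp
  qed simp
  then have L: "L2 W p x = 0" using ne by simp
  show ?thesis unfolding p_def[symmetric] L S_def[symmetric]
  proof (intro equalityI subsetI)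
    fix t assume "t \<in> ident2 W (\<lambda>q'. \<forall>w\<in>W. misr2 q' True x w = 0) p x"
    then obtain ps' psw' q' where t: "t = ps' x" and m: "model2 W ps' psw' q'"
      and c0: "\<forall>w\<in>W. misr2 q' True x w = 0" and o: "\<forall>x' w. w \<in> W \<longrightarrow> obs2 psw' q' x' w = p x' w"
      unfolding ident2_def by blast
    have t01: "0 \<le> t" "t \<le> 1" using m t unfolding model2_def by auto
    have "t \<le> p x w" if w: "w \<in> W" for w
    proof -
      have "p x w = t + (1 - t) * q' False x w" using o[rule_format, OF w, of x] w c0 m t unfolding obs2_def model2_def by auto
      moreover have "0 \<le> (1 - t) * q' False x w" using m w t01 unfolding model2_def by simp
      ultimately show ?thesis by simp
    qed
    then have "t \<le> S" unfolding S_def using ne by (intro cINF_greatest) auto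
    then show "t \<in> {0..S}" using t01 by simp
  next
    fix t assume "t \<in> {0..S}"
    then have t1: "0 \<le> t" and t2: "t \<le> S" by auto
    have pS: "S \<le> p x w" if "w \<in> W" for w unfolding S_def by (rule inf_W_le[OF fin that])
    obtain w0 where "w0 \<in> W" using ne by blast
    then have "p x w0 < 1" using pos by (simp add: p_def)
    then have tl: "t < 1" using pS[OF \<open>w0 \<in> W\<close>] t2 by linarith
    define a where "a = (\<lambda>w. 1 - (1 - p x w) / (1 - t))"
    have "\<exists>ps' psw' q'. model2 W ps' psw' q' \<and> (\<forall>w\<in>W. q' True x w = 1 \<and> q' False x w = a w) \<and>
     (\<forall>x' w. w \<in> W \<longrightarrow> obs2 psw' q' x' w = obs2 psw2 q2 x' w) \<and> ps' x = t"
    proof (rule constr2[OF M])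
      show "0 \<le> t" "t \<le> 1" using t1 tl by auto
      show "\<forall>w\<in>W. 0 \<le> a w \<and> a w \<le> 1 \<and> (1::real) \<le> 1"
      proof
        fix w assume w: "w \<in> W"
        have "1 - p x w \<le> 1 - t" using pS[OF w] t2 by simp
        then have "(1 - p x w) / (1 - t) \<le> 1" using tl by simp
        moreover have "0 \<le> (1 - p x w) / (1 - t)" using tl pos w unfolding p_def
          by (auto intro: divide_nonneg_pos less_imp_le)
        ultimately show "0 \<le> a w \<and> a w \<le> 1 \<and> (1::real) \<le> 1" unfolding a_def by simp
      qed
      show "\<forall>w1\<in>W. \<forall>w2\<in>W. w2 < w1 \<longrightarrow> a w1 \<le> a w2 \<and> (1::real) \<le> 1"
        using mono tl unfolding a_def by (auto intro: divide_right_mono)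
      show "\<forall>w\<in>W. t * 1 + (1 - t) * a w = obs2 psw2 q2 x w"
      proof
        fix w
        have "(1 - t) * ((1 - p x w) / (1 - t)) = 1 - p x w" using tl by simp
        then have "t * 1 + (1 - t) * a w = p x w" unfolding a_def by (simp add: algebra_simps)
        then show "t * 1 + (1 - t) * a w = obs2 psw2 q2 x w" by (simp add: p_def)
      qed
    qed
    then obtain ps' psw' q' where "model2 W ps' psw' q'" "\<forall>w\<in>W. misr2 q' True x w = 0"
       "\<forall>x' w. w \<in> W \<longrightarrow> obs2 psw' q' x' w = p x' w" "ps' x = t"
      unfolding p_def by auto
    then show "t \<in> ident2 W (\<lambda>q'. \<forall>w\<in>W. misr2 q' True x w = 0) p x"
      unfolding ident2_def by fastforce
  qed
qed

theorem proposition3: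
  fixes ps1 :: "'a \<times> 'z::finite \<Rightarrow> real" and q1 :: "bool \<Rightarrow> 'a \<times> 'z \<Rightarrow> real"
    and qt1 :: "bool \<Rightarrow> 'a \<Rightarrow> real" and xt :: 'a and z :: 'z
    and W :: "real set" and ps2 :: "'x \<Rightarrow> real" and psw2 :: "'x \<Rightarrow> real \<Rightarrow> real"
    and q2 :: "bool \<Rightarrow> 'x \<Rightarrow> real \<Rightarrow> real" and x :: 'x
  shows
   "(model1 ps1 q1 qt1 \<and>
     (\<forall>xt'. pup1 (obs1 ps1 q1) xt' > 0) \<and> (\<forall>xt'. plow1 (obs1 ps1 q1) xt' < 1) \<longrightarrow>
       (misr qt1 False xt = 0 \<longrightarrow>
          ident1 (\<lambda>qt'. misr qt' False xt = 0) (obs1 ps1 q1) (xt, z)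
            = {obs1 ps1 q1 (xt, z) .. U1 (obs1 ps1 q1) (xt, z)}) \<and>
       (misr qt1 True xt = 0 \<longrightarrow>
          ident1 (\<lambda>qt'. misr qt' True xt = 0) (obs1 ps1 q1) (xt, z)
            = {L1 (obs1 ps1 q1) (xt, z) .. obs1 ps1 q1 (xt, z)}))
    \<and>
    (finite W \<and> W \<noteq> {} \<and> model2 W ps2 psw2 q2 \<and>
     (\<forall>x' w. w \<in> W \<longrightarrow> 0 < obs2 psw2 q2 x' w \<and> obs2 psw2 q2 x' w < 1) \<longrightarrow>
       ((\<forall>w\<in>W. misr2 q2 False x w = 0) \<longrightarrow>
          ident2 W (\<lambda>q'. \<forall>w\<in>W. misr2 q' False x w = 0) (obs2 psw2 q2) x
            = {(SUP w\<in>W. obs2 psw2 q2 x w) .. U2 W (obs2 psw2 q2) x}) \<and>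
       ((\<forall>w\<in>W. misr2 q2 True x w = 0) \<longrightarrow>
          ident2 W (\<lambda>q'. \<forall>w\<in>W. misr2 q' True x w = 0) (obs2 psw2 q2) x
            = {L2 W (obs2 psw2 q2) x .. (INF w\<in>W. obs2 psw2 q2 x w)}))"
  proof (intro conjI impI)
  assume h: "model1 ps1 q1 qt1 \<and>
     (\<forall>xt'. pup1 (obs1 ps1 q1) xt' > 0) \<and> (\<forall>xt'. plow1 (obs1 ps1 q1) xt' < 1)"
  show "ident1 (\<lambda>qt'. misr qt' False xt = 0) (obs1 ps1 q1) (xt, z)
            = {obs1 ps1 q1 (xt, z) .. U1 (obs1 ps1 q1) (xt, z)}"
    using h by (intro part1a) auto
  show "ident1 (\<lambda>qt'. misr qt' True xt = 0) (obs1 ps1 q1) (xt, z)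
            = {L1 (obs1 ps1 q1) (xt, z) .. obs1 ps1 q1 (xt, z)}"
    using h by (intro part1b) auto
next
  assume h: "finite W \<and> W \<noteq> {} \<and> model2 W ps2 psw2 q2 \<and>
     (\<forall>x' w. w \<in> W \<longrightarrow> 0 < obs2 psw2 q2 x' w \<and> obs2 psw2 q2 x' w < 1)"
  show "(\<forall>w\<in>W. misr2 q2 False x w = 0) \<Longrightarrow>
          ident2 W (\<lambda>q'. \<forall>w\<in>W. misr2 q' False x w = 0) (obs2 psw2 q2) x
            = {(SUP w\<in>W. obs2 psw2 q2 x w) .. U2 W (obs2 psw2 q2) x}"
    using h by (intro part2a) auto
  show "(\<forall>w\<in>W. misr2 q2 True x w = 0) \<Longrightarrow>
          ident2 W (\<lambda>q'. \<forall>w\<in>W. misr2 q' True x w = 0) (obs2 psw2 q2) x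
            = {L2 W (obs2 psw2 q2) x .. (INF w\<in>W. obs2 psw2 q2 x w)}"
    using h by (intro part2b) auto
qed

end
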